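(* Let $(S,I_S,\psi_S)$ be a complete and perfect object of $\mathcal{C}_{p^h}$. Then for every $a\in S/I_S$ there is a unique $\widetilde a\in S$ such that $\widetilde a\equiv a \bmod I_S$ and $\psi_S(\widetilde a)=\widetilde a^{\,p^h}$.
   Context: $\mathcal{C}_{p^h}$ (for a prime $p$ and integer $h\ge1$) is the category whose objects are triples $(R,I_R,\psi_R)$ with $R$ a commutative ring, $I_R\subseteq R$ an ideal with $p\in I_R$, and $\psi_R\colon R\to R$ a ring endomorphism such that $\psi_R(x)\equiv x^{p^h}\bmod I_R$ for all $x\in R$. A morphism $(R,I_R,\psi_R)\to(S,I_S,\psi_S)$ is a ring homomorphism $\mu$ with $\mu(I_R)\subseteq I_S$ and $\mu\psi_R=\psi_S\mu$. An object is complete if $R\to\lim_k R/I_R^k$ is an isomorphism, and perfect if $\psi_R$ is an isomorphism with $\psi_R(I_R)=I_R$. *)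

theory Defs
  imports Main "HOL-Computational_Algebra.Primes"
begin

definition is_ideal :: "'a::comm_ring_1 set \<Rightarrow> bool" where
  "is_ideal I \<longleftrightarrow> 0 \<in> I \<and> (\<forall>x\<in>I. \<forall>y\<in>I. x + y \<in> I) \<and> (\<forall>r. \<forall>x\<in>I. r * x \<in> I)"

definition ideal_gen :: "'a::comm_ring_1 set \<Rightarrow> 'a set" where
  "ideal_gen A = \<Inter>{J. is_ideal J \<and> A \<subseteq> J}"

fun ideal_pow :: "'a::comm_ring_1 set \<Rightarrow> nat \<Rightarrow> 'a set" where
  "ideal_pow I 0 = UNIV"
| "ideal_pow I (Suc k) = ideal_gen {a * b | a b. a \<in> ideal_pow I k \<and> b \<in> I}"

definition ring_endo :: "('a::comm_ring_1 \<Rightarrow> 'a) \<Rightarrow> bool" where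
  "ring_endo f \<longleftrightarrow> f 1 = 1 \<and> (\<forall>x y. f (x + y) = f x + f y) \<and> (\<forall>x y. f (x * y) = f x * f y)"

text \<open>Objects of the category \<open>C_{p^h}\<close>: \<open>(R, I, \<psi>)\<close>, with \<open>R\<close> the ambient type.\<close>
definition C_obj :: "nat \<Rightarrow> nat \<Rightarrow> 'a::comm_ring_1 set \<Rightarrow> ('a \<Rightarrow> 'a) \<Rightarrow> bool" where
  "C_obj p h I \<psi> \<longleftrightarrow> is_ideal I \<and> of_nat p \<in> I \<and> ring_endo \<psi> \<and>
     (\<forall>x. \<psi> x - x ^ (p ^ h) \<in> I)"

text \<open>Completeness: the canonical map \<open>R \<rightarrow> lim_k R/I^k\<close> is bijective.  An element of the
  inverse limit is a compatible family of classes, represented by a sequence \<open>x\<close> with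
  \<open>x (k+1) \<equiv> x k mod I^k\<close>; the canonical map sends \<open>r\<close> to the family of classes of \<open>r\<close>.\<close>
definition complete_obj :: "'a::comm_ring_1 set \<Rightarrow> bool" where
  "complete_obj I \<longleftrightarrow>
     (\<forall>r s. (\<forall>k. r - s \<in> ideal_pow I k) \<longrightarrow> r = s) \<and>
     (\<forall>x::nat \<Rightarrow> 'a. (\<forall>k. x (Suc k) - x k \<in> ideal_pow I k) \<longrightarrow>
        (\<exists>r. \<forall>k. r - x k \<in> ideal_pow I k))"

definition perfect_obj :: "'a::comm_ring_1 set \<Rightarrow> ('a \<Rightarrow> 'a) \<Rightarrow> bool" where
  "perfect_obj I \<psi> \<longleftrightarrow> bij \<psi> \<and> \<psi> ` I = I"

end

theory Submission
  imports Defs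
begin

lemma id_diff: "is_ideal J \<Longrightarrow> x \<in> J \<Longrightarrow> y \<in> J \<Longrightarrow> x - y \<in> J"
  unfolding is_ideal_def
  by (metis (no_types, lifting) diff_conv_add_uminus mult_minus1)

lemma id_add: "is_ideal J \<Longrightarrow> x \<in> J \<Longrightarrow> y \<in> J \<Longrightarrow> x + y \<in> J"
  unfolding is_ideal_def by blast

lemma id_multl: "is_ideal J \<Longrightarrow> x \<in> J \<Longrightarrow> r * x \<in> J"
  unfolding is_ideal_def by blast

lemma id_multr: "is_ideal J \<Longrightarrow> x \<in> J \<Longrightarrow> x * r \<in> J"
  unfolding is_ideal_def by (metis mult.commute)

lemma id_zero: "is_ideal J \<Longrightarrow> 0 \<in> J"
  unfolding is_ideal_def by blast

lemma id_sum: "is_ideal J \<Longrightarrow> (\<And>i. i \<in> A \<Longrightarrow> f i \<in> J) \<Longrightarrow> sum f A \<in> J"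
proof (induction A rule: infinite_finite_induct)
  case (infinite A) then show ?case by (simp add: id_zero)
next
  case empty then show ?case by (simp add: id_zero)
next
  case (insert x F) then show ?case by (simp add: id_add)
qed

lemma id_neg: "is_ideal J \<Longrightarrow> x \<in> J \<Longrightarrow> -x \<in> J"
  using id_diff[of J 0 x] id_zero by auto

lemma ideal_gen_ideal: "is_ideal (ideal_gen A)"
  unfolding ideal_gen_def is_ideal_def by auto

lemma ideal_gen_sub: "A \<subseteq> ideal_gen A"
  unfolding ideal_gen_def by auto

lemma ideal_gen_least: "is_ideal J \<Longrightarrow> A \<subseteq> J \<Longrightarrow> ideal_gen A \<subseteq> J"
  unfolding ideal_gen_def by auto

lemma ideal_pow_ideal: "is_ideal (ideal_pow I k)"
proof (cases k)
  case 0 then show ?thesis by (simp add: is_ideal_def)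
next
  case (Suc m) then show ?thesis by (simp only: ideal_pow.simps ideal_gen_ideal)
qed

lemma ideal_pow_mult: "a \<in> ideal_pow I k \<Longrightarrow> b \<in> I \<Longrightarrow> a * b \<in> ideal_pow I (Suc k)"
  unfolding ideal_pow.simps(2) using ideal_gen_sub by fastforce

lemma ideal_pow_Suc_sub: "ideal_pow I (Suc k) \<subseteq> ideal_pow I k"
  unfolding ideal_pow.simps(2)
  by (rule ideal_gen_least[OF ideal_pow_ideal[of I k]]) (use id_multr[OF ideal_pow_ideal[of I k]] in blast)

declare ideal_pow.simps(2)[simp del]

lemma ideal_pow_mono: "k \<le> m \<Longrightarrow> ideal_pow I m \<subseteq> ideal_pow I k"
  using lift_Suc_antimono_le[of "ideal_pow I", OF ideal_pow_Suc_sub] by blast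

lemma ideal_pow_one: "is_ideal I \<Longrightarrow> ideal_pow I 1 = I"
proof
  assume I: "is_ideal I"
  show "ideal_pow I 1 \<subseteq> I"
    unfolding One_nat_def ideal_pow.simps(2)
    by (rule ideal_gen_least[OF I]) (use id_multl[OF I] in auto)
  show "I \<subseteq> ideal_pow I 1"
    using ideal_pow_mult[of 1 I 0] by fastforce
qed

lemma ideal_pow_sub_I: "is_ideal I \<Longrightarrow> k \<ge> 1 \<Longrightarrow> ideal_pow I k \<subseteq> I"
  using ideal_pow_mono[of 1 k I] ideal_pow_one[of I] by auto

lemma pow_diff_in: "is_ideal J \<Longrightarrow> x - y \<in> J \<Longrightarrow> x ^ n - y ^ n \<in> J"
  using power_diff_sumr2[of x n y] id_multr by metis

lemma pow_p_step:
  assumes I: "is_ideal I" and p: "of_nat p \<in> I" and k: "k \<ge> 1"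
    and d: "x - y \<in> ideal_pow I k"
  shows "x ^ p - y ^ p \<in> ideal_pow I (Suc k)"
proof -
  have dI: "x - y \<in> I" using d ideal_pow_sub_I[OF I k] by auto
  define s where "s = (\<Sum>i<p. y ^ (p - Suc i) * x ^ i)"
  have eq: "x ^ p - y ^ p = (x - y) * s"
    unfolding s_def by (rule power_diff_sumr2)
  have "s - of_nat p * y ^ (p - 1) = (\<Sum>i<p. y ^ (p - Suc i) * (x ^ i - y ^ i))"
  proof -
    have "(\<Sum>i<p. y ^ (p - Suc i) * y ^ i) = (\<Sum>i<p. y ^ (p - 1))"
      by (rule sum.cong) (auto simp: power_add[symmetric])
    then have "(\<Sum>i<p. y ^ (p - Suc i) * y ^ i) = of_nat p * y ^ (p - 1)" by simp
    then show ?thesis unfolding s_def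
      by (simp add: right_diff_distrib sum_subtractf)
  qed
  moreover have "(\<Sum>i<p. y ^ (p - Suc i) * (x ^ i - y ^ i)) \<in> I"
    by (rule id_sum[OF I]) (intro id_multl[OF I] pow_diff_in[OF I dI])
  moreover have "of_nat p * y ^ (p - 1) \<in> I" using id_multr[OF I p] .
  ultimately have "s \<in> I"
    by (metis I diff_add_cancel id_add)
  then show ?thesis using eq ideal_pow_mult[OF d] by simp
qed

lemma pow_q_step:
  assumes I: "is_ideal I" and p: "of_nat p \<in> I" and k: "k \<ge> 1" and h: "h \<ge> 1"
    and d: "x - y \<in> ideal_pow I k"
  shows "x ^ (p ^ h) - y ^ (p ^ h) \<in> ideal_pow I (Suc k)"
  using h
proof (induction h rule: dec_induct)
  case base then show ?case using pow_p_step[OF I p k d] by simp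
next
  case (step n)
  have "(x ^ p ^ n) ^ p - (y ^ p ^ n) ^ p \<in> ideal_pow I (Suc (Suc k))"
    by (rule pow_p_step[OF I p _ step.IH]) simp
  then show ?case using ideal_pow_Suc_sub[of I "Suc k"]
    by (auto simp: power_mult[symmetric] mult.commute)
qed

theorem corollary2p2:
  fixes p h :: nat and I :: "'a::comm_ring_1 set" and \<psi> :: "'a \<Rightarrow> 'a"
  assumes "prime p" and "h \<ge> 1"
    and "C_obj p h I \<psi>" and "complete_obj I" and "perfect_obj I \<psi>"
  shows "\<forall>a. \<exists>!t. t - a \<in> I \<and> \<psi> t = t ^ (p ^ h)"
proof -
  have I: "is_ideal I" and pI: "of_nat p \<in> I" and endo: "ring_endo \<psi>"
    and cong: "\<And>x. \<psi> x - x ^ (p ^ h) \<in> I"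
    using assms(3) unfolding C_obj_def by auto
  have sep: "\<And>r s. (\<And>k. r - s \<in> ideal_pow I k) \<Longrightarrow> r = s"
    and lim: "\<And>x. (\<And>k. x (Suc k) - x k \<in> ideal_pow I k) \<Longrightarrow> \<exists>r. \<forall>k. r - x k \<in> ideal_pow I k"
    using assms(4) unfolding complete_obj_def by blast+
  have bij: "bij \<psi>" and psiI: "\<psi> ` I = I" using assms(5) unfolding perfect_obj_def by auto
  define \<phi> where "\<phi> = inv \<psi>"
  have pf: "\<psi> (\<phi> x) = x" for x unfolding \<phi>_def using bij by (simp add: bij_is_surj surj_f_inv_f)
  have fp: "\<phi> (\<psi> x) = x" for x unfolding \<phi>_def using bij by (simp add: bij_is_inj)
  have padd: "\<psi> (x + y) = \<psi> x + \<psi> y" and pmul: "\<psi> (x * y) = \<psi> x * \<psi> y" for x y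
    using endo unfolding ring_endo_def by auto
  have fadd: "\<phi> (x + y) = \<phi> x + \<phi> y" for x y
    by (metis fp padd pf)
  have fmul: "\<phi> (x * y) = \<phi> x * \<phi> y" for x y
    by (metis fp pmul pf)
  have fdiff: "\<phi> (x - y) = \<phi> x - \<phi> y" for x y
    by (metis diff_add_cancel eq_diff_eq fadd)
  have fI: "\<phi> x \<in> I" if "x \<in> I" for x
    using that psiI fp by (metis imageE)
  have fpow: "\<phi> x \<in> ideal_pow I k" if "x \<in> ideal_pow I k" for x k
    using that
  proof (induction k arbitrary: x)
    case 0 then show ?case by simp
  next
    case (Suc k)
    define J where "J = {x. \<phi> x \<in> ideal_pow I (Suc k)}"
    have J: "is_ideal J"
      unfolding is_ideal_def J_def
      using ideal_pow_ideal[of I "Suc k"] fadd fmul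
      by (metis (no_types, lifting) fdiff diff_self id_add id_multl id_zero mem_Collect_eq)
    have "{a * b |a b. a \<in> ideal_pow I k \<and> b \<in> I} \<subseteq> J"
      unfolding J_def using ideal_pow_mult[OF Suc.IH fI] fmul by auto
    then have "ideal_pow I (Suc k) \<subseteq> J" using ideal_gen_least[OF J] by (simp add: ideal_pow.simps(2))
    then show ?case using Suc.prems unfolding J_def by auto
  qed
  define q where "q = p ^ h"
  define T where "T x = \<phi> (x ^ q)" for x
  have TI: "T x - x \<in> I" for x
  proof -
    have "x ^ q - \<psi> x \<in> I" using id_neg[OF I cong[of x]] by (simp add: q_def)
    then have "\<phi> (x ^ q - \<psi> x) \<in> I" by (rule fI)
    then show ?thesis by (simp add: T_def fdiff fp)
  qed
  have key: "T x - T y \<in> ideal_pow I (Suc k)" if "k \<ge> 1" "x - y \<in> ideal_pow I k" for x y k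
    using fpow[OF pow_q_step[OF I pI that(1) assms(2) that(2)]] by (simp add: T_def q_def fdiff)
  have fix_ok: "\<psi> t = t ^ q" if "T t = t" for t
    using that pf unfolding T_def by metis
  show ?thesis
  proof
    fix a
    define x where "x n = (T ^^ n) a" for n
    have xs: "x (Suc n) - x n \<in> ideal_pow I (Suc n)" for n
    proof (induction n)
      case 0 then show ?case using TI ideal_pow_one[OF I] by (simp add: x_def)
    next
      case (Suc n)
      then show ?case using key[of "Suc n" "x (Suc n)" "x n"] by (simp add: x_def)
    qed
    have "\<exists>r. \<forall>k. r - x k \<in> ideal_pow I k"
      by (rule lim) (use xs ideal_pow_Suc_sub in blast)
    then obtain t where t: "\<And>k. t - x k \<in> ideal_pow I k" by blast
    have Tt: "T t = t"
    proof (rule sep)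
      fix k
      show "T t - t \<in> ideal_pow I k"
      proof (cases k)
        case 0 then show ?thesis by simp
      next
        case (Suc m)
        have "T t - x (Suc (Suc m)) \<in> ideal_pow I (Suc (Suc m))"
          using key[of "Suc m" t "x (Suc m)"] t[of "Suc m"] by (simp add: x_def)
        then have a1: "T t - x (Suc (Suc m)) \<in> ideal_pow I k"
          using ideal_pow_Suc_sub Suc by blast
        have a2: "t - x (Suc (Suc m)) \<in> ideal_pow I k"
          using t[of "Suc (Suc m)"] ideal_pow_Suc_sub Suc by blast
        show ?thesis using id_diff[OF ideal_pow_ideal a1 a2] by simp
      qed
    qed
    have ta: "t - a \<in> I"
    proof -
      have "t - x 1 \<in> I" using t[of 1] ideal_pow_one[OF I] by simp
      moreover have "x 1 - a \<in> I" using TI by (simp add: x_def)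
      ultimately show ?thesis using id_add[OF I] by fastforce
    qed
    show "\<exists>!t. t - a \<in> I \<and> \<psi> t = t ^ (p ^ h)"
    proof (rule ex1I[of _ t])
      show "t - a \<in> I \<and> \<psi> t = t ^ p ^ h" using ta fix_ok[OF Tt] by (simp add: q_def)
    next
      fix s assume s: "s - a \<in> I \<and> \<psi> s = s ^ p ^ h"
      have Ts: "T s = s" using s fp unfolding T_def q_def by metis
      have st: "s - t \<in> I" using id_diff[OF I conjunct1[OF s] ta] by simp
      have "s - t \<in> ideal_pow I k" for k
      proof (induction k)
        case 0 then show ?case by simp
      next
        case (Suc k)
        show ?case
        proof (cases k)
          case 0 then show ?thesis using st ideal_pow_one[OF I] by simp
        next
          case (Suc m)
          then show ?thesis using key[of k s t] Suc.IH Ts Tt by simp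
        qed
      qed
      then show "s = t" by (rule sep)
    qed
  qed
qed

end
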